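(* Let $k$ be a difference field of characteristic $0$, $R=k\{y_1,\ldots,y_n\}$, $I$ a radical well-mixed monomial $\sigma$-ideal of $R$, and $\mathbf{a}\in(\mathbb{N}\cup\{-1\})^n$ with $\mathbf{a}\geqslant\mathbf{b}$ for every character vector $\mathbf{b}$ of $I$. Then \[I=\bigcap\{\mathfrak{m}^{\mathbf{a}\backslash\mathbf{b}}:\mathbf{b}\text{ is a character vector of }I^{[\mathbf{a}]}\},\] and \[I^{[\mathbf{a}]}=\langle \mathbf{y}^{x^{\mathbf{a}\backslash\mathbf{b}}}:\mathfrak{m}^{\mathbf{b}}\text{ is an irreducible component of }I\rangle_r.\]
   Context: A difference field is a field $k$ with a ring endomorphism $\sigma$; $R=k\{y_1,\ldots,y_n\}$ is the polynomial ring over $k$ in the variables $\sigma^j(y_i)$, with $\sigma$ extended naturally. For $p=\sum_i c_ix^i\in\mathbb{N}[x]$ and $a\in R$, $a^p=\prod_i(\sigma^i(a))^{c_i}$; $\mathbf{y}^{\mathbf{u}}=y_1^{u_1}\cdots y_n^{u_n}$. A $\sigma$-ideal is an ideal stable under $\sigma$; monomial if generated by monomials; well-mixed if $ab\in I\Rightarrow a\sigma(b)\in I$. $\langle F\rangle_r$ is the smallest radical well-mixed $\sigma$-ideal containing $F$. For $\mathbf{b}\in(\mathbb{N}\cup\{-1\})^n$, $x^{\mathbf{b}}=(x^{b_1},\ldots,x^{b_n})$ with $x^{-1}=0$, and $\mathfrak{m}^{\mathbf{b}}$ is the $\sigma$-ideal generated by $\{y_i^{x^{b_i}}:b_i\ne-1\}$.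 Every radical well-mixed monomial $\sigma$-ideal $I$ has a unique irredundant decomposition $I=\mathfrak{m}^{\mathbf{b}_1}\cap\cdots\cap\mathfrak{m}^{\mathbf{b}_s}$; the $\mathfrak{m}^{\mathbf{b}_i}$ are its irreducible components. Vectors are compared componentwise. The character vectors of $I$ are the finitely many vectors $\mathbf{a}_1,\ldots,\mathbf{a}_m$ forming a minimal set with $I=\langle\mathbf{y}^{x^{\mathbf{a}_1}},\ldots,\mathbf{y}^{x^{\mathbf{a}_m}}\rangle_r$ (equivalently, the componentwise-minimal $\mathbf{a}$ with $\mathbf{y}^{x^{\mathbf{a}}}\in I$). For $\mathbf{b}\leqslant\mathbf{a}$, $\mathbf{a}\backslash\mathbf{b}$ has $i$-th coordinate $a_i+1-b_i$ if $b_i\ge0$ and $-1$ if $b_i=-1$. The Alexander dual is $I^{[\mathbf{a}]}=\bigcap\{\mathfrak{m}^{\mathbf{a}\backslash\mathbf{b}}:\mathbf{b}\text{ a character vector of }I\}$, defined when $\mathbf{a}$ dominates all character vectors of $I$. *)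

theory Defs
  imports Main "HOL-Library.Poly_Mapping"
begin

definition difference_field :: "('k::field \<Rightarrow> 'k) \<Rightarrow> bool" where
  "difference_field \<sigma> \<longleftrightarrow> \<sigma> 1 = 1 \<and> (\<forall>a b. \<sigma> (a + b) = \<sigma> a + \<sigma> b) \<and>
     (\<forall>a b. \<sigma> (a * b) = \<sigma> a * \<sigma> b)"

text \<open>The difference polynomial ring R = k{y_1,...,y_n}: the polynomial ring over k
  in the variables sigma^j(y_i); the variable (i, j) stands for sigma^j(y_i).\<close>
type_synonym ('n, 'k) dpoly = "(('n \<times> nat) \<Rightarrow>\<^sub>0 nat) \<Rightarrow>\<^sub>0 'k"

definition shift_mono :: "(('n \<times> nat) \<Rightarrow>\<^sub>0 nat) \<Rightarrow> (('n \<times> nat) \<Rightarrow>\<^sub>0 nat)" where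
  "shift_mono m = (\<Sum>v\<in>Poly_Mapping.keys m. Poly_Mapping.single (fst v, Suc (snd v)) (Poly_Mapping.lookup m v))"

definition sigmaR :: "('k::field \<Rightarrow> 'k) \<Rightarrow> ('n, 'k) dpoly \<Rightarrow> ('n, 'k) dpoly" where
  "sigmaR \<sigma> p = (\<Sum>m\<in>Poly_Mapping.keys p. Poly_Mapping.single (shift_mono m) (\<sigma> (Poly_Mapping.lookup p m)))"

definition is_ideal :: "'a::comm_ring_1 set \<Rightarrow> bool" where
  "is_ideal I \<longleftrightarrow> 0 \<in> I \<and> (\<forall>a\<in>I. \<forall>b\<in>I. a + b \<in> I) \<and> (\<forall>r. \<forall>a\<in>I. r * a \<in> I)"

definition ideal_gen :: "'a::comm_ring_1 set \<Rightarrow> 'a set" where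
  "ideal_gen S = \<Inter>{J. is_ideal J \<and> S \<subseteq> J}"

definition sigma_ideal :: "('k::field \<Rightarrow> 'k) \<Rightarrow> ('n, 'k) dpoly set \<Rightarrow> bool" where
  "sigma_ideal \<sigma> I \<longleftrightarrow> is_ideal I \<and> (\<forall>a\<in>I. sigmaR \<sigma> a \<in> I)"

definition radical :: "'a::comm_ring_1 set \<Rightarrow> bool" where
  "radical I \<longleftrightarrow> (\<forall>a. \<forall>k::nat. a ^ k \<in> I \<longrightarrow> a \<in> I)"

definition well_mixed :: "('k::field \<Rightarrow> 'k) \<Rightarrow> ('n, 'k) dpoly set \<Rightarrow> bool" where
  "well_mixed \<sigma> I \<longleftrightarrow> (\<forall>a b. a * b \<in> I \<longrightarrow> a * sigmaR \<sigma> b \<in> I)"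

definition monomials :: "('n, 'k::field) dpoly set" where
  "monomials = {Poly_Mapping.single m 1 | m. True}"

definition monomial_ideal :: "('n, 'k::field) dpoly set \<Rightarrow> bool" where
  "monomial_ideal I \<longleftrightarrow> I = ideal_gen (I \<inter> monomials)"

definition sigma_ideal_gen :: "('k::field \<Rightarrow> 'k) \<Rightarrow> ('n, 'k) dpoly set \<Rightarrow> ('n, 'k) dpoly set" where
  "sigma_ideal_gen \<sigma> S = \<Inter>{J. sigma_ideal \<sigma> J \<and> S \<subseteq> J}"

definition rwm_gen :: "('k::field \<Rightarrow> 'k) \<Rightarrow> ('n, 'k) dpoly set \<Rightarrow> ('n, 'k) dpoly set" where
  "rwm_gen \<sigma> F = \<Inter>{J. sigma_ideal \<sigma> J \<and> radical J \<and> well_mixed \<sigma> J \<and> F \<subseteq> J}"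

text \<open>Vectors are maps from the (finite) variable index type to int with all entries \<ge> -1;
  an entry -1 encodes x^(-1) = 0. Comparison is componentwise (the pointwise order).\<close>
definition valid_vec :: "('n \<Rightarrow> int) \<Rightarrow> bool" where
  "valid_vec v \<longleftrightarrow> (\<forall>i. v i \<ge> -1)"

definition dvar :: "'n \<Rightarrow> nat \<Rightarrow> ('n, 'k::field) dpoly" where
  "dvar i j = Poly_Mapping.single (Poly_Mapping.single (i, j) 1) 1"

definition ymono :: "('n::finite \<Rightarrow> int) \<Rightarrow> ('n, 'k::field) dpoly" where
  "ymono a = Poly_Mapping.single (\<Sum>i\<in>{i. a i \<noteq> -1}. Poly_Mapping.single (i, nat (a i)) 1) 1"

definition mideal :: "('k::field \<Rightarrow> 'k) \<Rightarrow> ('n \<Rightarrow> int) \<Rightarrow> ('n, 'k) dpoly set" where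
  "mideal \<sigma> b = sigma_ideal_gen \<sigma> {dvar i (nat (b i)) | i. b i \<noteq> -1}"

definition character_vector :: "('n::finite, 'k::field) dpoly set \<Rightarrow> ('n \<Rightarrow> int) \<Rightarrow> bool" where
  "character_vector I a \<longleftrightarrow> valid_vec a \<and> ymono a \<in> I \<and>
     (\<forall>a'. valid_vec a' \<and> ymono a' \<in> I \<and> a' \<le> a \<longrightarrow> a' = a)"

text \<open>Irreducible components: members of an irredundant decomposition
  I = m^(b_1) \<inter> ... \<inter> m^(b_s) (which is unique by the paper).\<close>
definition irredundant_decomp :: "('k::field \<Rightarrow> 'k) \<Rightarrow> ('n, 'k) dpoly set \<Rightarrow> ('n \<Rightarrow> int) set \<Rightarrow> bool" where
  "irredundant_decomp \<sigma> I S \<longleftrightarrow> finite S \<and> (\<forall>b\<in>S. valid_vec b) \<and>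
     I = \<Inter>(mideal \<sigma> ` S) \<and> (\<forall>b\<in>S. \<Inter>(mideal \<sigma> ` (S - {b})) \<noteq> I)"

definition irreducible_component :: "('k::field \<Rightarrow> 'k) \<Rightarrow> ('n, 'k) dpoly set \<Rightarrow> ('n \<Rightarrow> int) \<Rightarrow> bool" where
  "irreducible_component \<sigma> I b \<longleftrightarrow> (\<exists>S. irredundant_decomp \<sigma> I S \<and> b \<in> S)"

definition vdiff :: "('n \<Rightarrow> int) \<Rightarrow> ('n \<Rightarrow> int) \<Rightarrow> ('n \<Rightarrow> int)" where
  "vdiff a b = (\<lambda>i. if b i = -1 then -1 else a i + 1 - b i)"

definition alexander_dual :: "('k::field \<Rightarrow> 'k) \<Rightarrow> ('n::finite, 'k) dpoly set \<Rightarrow> ('n \<Rightarrow> int) \<Rightarrow> ('n, 'k) dpoly set" where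
  "alexander_dual \<sigma> I a = \<Inter>{mideal \<sigma> (vdiff a b) | b. character_vector I b}"

end

theory Submission imports Defs "HOL-Library.Countable" "HOL-Library.FuncSet" begin

abbreviation "lookup \<equiv> Poly_Mapping.lookup"
abbreviation "keys \<equiv> Poly_Mapping.keys"
abbreviation "single \<equiv> Poly_Mapping.single"

lemma nzd_gen:
  fixes f g :: "'a::comm_monoid_add \<Rightarrow>\<^sub>0 'b::semiring_no_zero_divisors"
    and \<Phi> :: "'a \<Rightarrow> 'c::{ordered_cancel_comm_monoid_add, linorder}"
  assumes inj: "inj \<Phi>" and add: "\<And>x y. \<Phi> (x + y) = \<Phi> x + \<Phi> y"
    and "f \<noteq> 0" and "g \<noteq> 0"
  shows "f * g \<noteq> 0"
  using assms(3,4)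
proof transfer
  fix f g :: "'a \<Rightarrow> 'b"
  define F where "F = {a. f a \<noteq> 0}"
  moreover define G where "G = {a. g a \<noteq> 0}"
  ultimately have [simp]:
    "\<And>a. f a \<noteq> 0 \<longleftrightarrow> a \<in> F"
    "\<And>b. g b \<noteq> 0 \<longleftrightarrow> b \<in> G"
    by simp_all
  assume "finite {a. f a \<noteq> 0}"
  then have fF: "finite F" by simp
  assume "finite {a. g a \<noteq> 0}"
  then have fG: "finite G" by simp
  assume "f \<noteq> (\<lambda>a. 0)"
  then obtain a where "f a \<noteq> 0" by (auto simp: fun_eq_iff)
  assume "g \<noteq> (\<lambda>b. 0)"
  then obtain b where "g b \<noteq> 0" by (auto simp: fun_eq_iff)
  from \<open>f a \<noteq> 0\<close> and \<open>g b \<noteq> 0\<close> have "F \<noteq> {}" and "G \<noteq> {}" by auto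
  obtain aF where aF: "aF \<in> F" "\<And>x. x \<in> F \<Longrightarrow> \<Phi> x \<le> \<Phi> aF"
  proof -
    have "Max (\<Phi> ` F) \<in> \<Phi> ` F" using fF \<open>F \<noteq> {}\<close> by simp
    then obtain x where "x \<in> F" "\<Phi> x = Max (\<Phi> ` F)" by auto
    then show ?thesis using that fF by auto
  qed
  obtain bG where bG: "bG \<in> G" "\<And>x. x \<in> G \<Longrightarrow> \<Phi> x \<le> \<Phi> bG"
  proof -
    have "Max (\<Phi> ` G) \<in> \<Phi> ` G" using fG \<open>G \<noteq> {}\<close> by simp
    then obtain x where "x \<in> G" "\<Phi> x = Max (\<Phi> ` G)" by auto
    then show ?thesis using that fG by auto
  qed
  define q where "q = aF + bG"
  have key: "x = aF \<and> y = bG" if "x \<in> F" "y \<in> G" "q = x + y" for x y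
  proof -
    have e: "\<Phi> x + \<Phi> y = \<Phi> aF + \<Phi> bG" using that add q_def by metis
    have l1: "\<Phi> x \<le> \<Phi> aF" and l2: "\<Phi> y \<le> \<Phi> bG" using that aF bG by auto
    have "\<Phi> x = \<Phi> aF"
    proof (rule ccontr)
      assume "\<Phi> x \<noteq> \<Phi> aF"
      then have "\<Phi> x < \<Phi> aF" using l1 by simp
      then have "\<Phi> x + \<Phi> y < \<Phi> aF + \<Phi> bG" using l2 by (rule add_less_le_mono)
      then show False using e by simp
    qed
    moreover then have "\<Phi> y = \<Phi> bG" using e by simp
    ultimately show ?thesis using inj by (auto dest: injD)
  qed
  have "(\<Sum>(a, b). f a * g b when q = a + b) =
    (\<Sum>(a, b). f a * g b when q = a + b when a \<in> F \<and> b \<in> G)"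
  proof (rule Sum_any.cong)
    fix ab :: "'a \<times> 'a"
    obtain a b where ab: "ab = (a, b)" by (cases ab) simp_all
    show "(case ab of (a, b) \<Rightarrow> f a * g b when q = a + b) =
       (case ab of (a, b) \<Rightarrow> f a * g b when q = a + b when a \<in> F \<and> b \<in> G)"
    proof (cases "a \<in> F \<and> b \<in> G")
      case True then show ?thesis by (simp add: ab)
    next
      case False
      then have "f a = 0 \<or> g b = 0" unfolding F_def G_def by blast
      then show ?thesis using False by (auto simp add: ab when_def)
    qed
  qed
  also have "\<dots> = (\<Sum>(a, b). f a * g b when (aF, bG) = (a, b))"
  proof (rule Sum_any.cong)
    fix ab :: "'a \<times> 'a"
    obtain a b where [simp]: "ab = (a, b)" by (cases ab) simp_all
    show "(case ab of (a, b) \<Rightarrow> f a * g b when q = a + b when a \<in> F \<and> b \<in> G) =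
       (case ab of (a, b) \<Rightarrow> f a * g b when (aF, bG) = (a, b))"
      using key[of a b] aF bG by (auto simp: when_def q_def)
  qed
  also have "\<dots> = (\<Sum>ab. (case ab of (a, b) \<Rightarrow> f a * g b) when (aF, bG) = ab)"
    unfolding split_def when_def by auto
  also have "\<dots> \<noteq> 0" using aF bG by simp
  finally have "prod_fun f g q \<noteq> 0"
    using \<open>finite {a. f a \<noteq> 0}\<close> \<open>finite {a. g a \<noteq> 0}\<close> by (simp add: prod_fun_unfold_prod)
  then show "prod_fun f g \<noteq> (\<lambda>k. 0)" by (auto simp: fun_eq_iff)
qed

definition phiM :: "('v::countable \<Rightarrow>\<^sub>0 nat) \<Rightarrow> (nat \<Rightarrow>\<^sub>0 nat)" where
  "phiM m = Abs_poly_mapping (\<lambda>n. if n \<in> (to_nat :: 'v \<Rightarrow> nat) ` UNIV then lookup m (from_nat n) else 0)"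

lemma lookup_phi: fixes m :: "'v::countable \<Rightarrow>\<^sub>0 nat" shows "lookup (phiM m) n = (if n \<in> (to_nat :: 'v::countable \<Rightarrow> nat) ` UNIV then lookup m (from_nat n) else 0)"
proof -
  have "{n. (if n \<in> (to_nat :: 'v \<Rightarrow> nat) ` UNIV then lookup m (from_nat n) else 0) \<noteq> 0} \<subseteq> to_nat ` keys m"
    by (auto simp: in_keys_iff from_nat_to_nat)
  then have "finite {n. (if n \<in> (to_nat :: 'v \<Rightarrow> nat) ` UNIV then lookup m (from_nat n) else 0) \<noteq> 0}"
    by (rule finite_subset) simp
  then show ?thesis unfolding phiM_def by simp
qed

lemma phi_add: "phiM (x + y) = phiM x + phiM y"
  by (rule poly_mapping_eqI) (simp add: lookup_phi lookup_add)

lemma phi_inj: "inj phiM"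
proof (rule injI)
  fix x y :: "'v::countable \<Rightarrow>\<^sub>0 nat"
  assume "phiM x = phiM y"
  show "x = y"
  proof (rule poly_mapping_eqI)
    fix k :: 'v
    have "lookup (phiM x) (to_nat k) = lookup (phiM y) (to_nat k)" using \<open>phiM x = phiM y\<close> by simp
    then show "lookup x k = lookup y k" by (simp add: lookup_phi from_nat_to_nat)
  qed
qed

lemma dpoly_nzd:
  fixes p q :: "('n::finite, 'k::field) dpoly"
  assumes "p \<noteq> 0" "q \<noteq> 0" shows "p * q \<noteq> 0"
  by (rule nzd_gen[OF phi_inj phi_add assms])

lemma poly_expand: "p = (\<Sum>m\<in>keys p. single m (lookup p m))"
proof (rule poly_mapping_eqI)
  fix k
  have "lookup (\<Sum>m\<in>keys p. single m (lookup p m)) k = (\<Sum>m\<in>keys p. lookup (single m (lookup p m)) k)"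
    by (simp add: lookup_sum)
  also have "\<dots> = (\<Sum>m\<in>keys p. if m = k then lookup p m else 0)"
    by (intro sum.cong) (auto simp: lookup_single)
  also have "\<dots> = lookup p k"
    by (auto simp: in_keys_iff)
  finally show "lookup p k = lookup (\<Sum>m\<in>keys p. single m (lookup p m)) k" by simp
qed

lemma ideal_zero: "is_ideal J \<Longrightarrow> 0 \<in> J" by (simp add: is_ideal_def)
lemma ideal_add: "is_ideal J \<Longrightarrow> a \<in> J \<Longrightarrow> b \<in> J \<Longrightarrow> a + b \<in> J" by (simp add: is_ideal_def)
lemma ideal_multL: "is_ideal J \<Longrightarrow> a \<in> J \<Longrightarrow> r * a \<in> J" by (simp add: is_ideal_def)
lemma ideal_multR: "is_ideal J \<Longrightarrow> a \<in> J \<Longrightarrow> a * r \<in> J"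
  by (metis ideal_multL mult.commute)
lemma ideal_diff: "is_ideal J \<Longrightarrow> a \<in> J \<Longrightarrow> b \<in> J \<Longrightarrow> a - b \<in> J"
proof -
  assume "is_ideal J" "a \<in> J" "b \<in> J"
  then have "a + (-1) * b \<in> J" unfolding is_ideal_def by blast
  then show ?thesis by simp
qed

lemma ideal_sum: "is_ideal J \<Longrightarrow> (\<And>x. x \<in> A \<Longrightarrow> f x \<in> J) \<Longrightarrow> sum f A \<in> J"
  by (induction A rule: infinite_finite_induct) (auto simp: ideal_zero ideal_add)

lemma single_decomp: "single m c = single 0 c * (single m 1 :: 'a::comm_monoid_add \<Rightarrow>\<^sub>0 'b::semiring_1)"
  by (simp add: mult_single)

lemma ideal_from_monos:
  assumes "is_ideal J" "\<And>m. m \<in> keys p \<Longrightarrow> single m 1 \<in> J"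
  shows "p \<in> J"
proof -
  have "(\<Sum>m\<in>keys p. single m (lookup p m)) \<in> J"
    by (rule ideal_sum[OF assms(1)]) (metis single_decomp ideal_multL assms)
  then show ?thesis using poly_expand by metis
qed

lemma mono_dvd:
  fixes J :: "('a::comm_monoid_add \<Rightarrow>\<^sub>0 'b::comm_ring_1) set"
  assumes "is_ideal J" "single g 1 \<in> J" "m = g + d"
  shows "single m 1 \<in> J"
proof -
  have e: "single d 1 * single g 1 = single (d + g) (1::'b)" by (simp add: mult_single)
  have "m = d + g" using assms(3) by (simp add: add.commute)
  then have "single m (1::'b) = single d 1 * single g 1" by (simp only: e)
  then show ?thesis using assms ideal_multL by metis
qed

lemma monomial_ideal_keys:
  fixes I :: "('n, 'k::field) dpoly set"
  assumes id: "is_ideal I" and mi: "monomial_ideal I" and p: "p \<in> I" and m: "m \<in> keys p"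
  shows "single m 1 \<in> I"
proof -
  define X where "X = {p :: ('n, 'k) dpoly. \<forall>m\<in>keys p. \<exists>g d. single g 1 \<in> I \<and> m = g + d}"
  have "is_ideal X"
    unfolding is_ideal_def
  proof (intro conjI ballI allI)
    show "0 \<in> X" by (simp add: X_def)
  next
    fix a b assume "a \<in> X" "b \<in> X"
    show "a + b \<in> X" unfolding X_def
    proof (rule CollectI, rule ballI)
      fix k assume "k \<in> keys (a + b)"
      then have "k \<in> keys a \<or> k \<in> keys b" using keys_add[of a b] by blast
      then show "\<exists>g d. single g 1 \<in> I \<and> k = g + d" using \<open>a \<in> X\<close> \<open>b \<in> X\<close> unfolding X_def by blast
    qed
  next
    fix r a assume a: "a \<in> X"
    show "r * a \<in> X" unfolding X_def
    proof (rule CollectI, rule ballI)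
      fix k assume "k \<in> keys (r * a)"
      then have "k \<in> {x + y | x y. x \<in> keys r \<and> y \<in> keys a}" using keys_mult[of r a] by blast
      then obtain x y where k: "k = x + y" "y \<in> keys a" by blast
      then obtain g d where gd: "single g 1 \<in> I" "y = g + d" using a unfolding X_def by blast
      have "k = g + (x + d)" using k gd by (simp add: add_ac)
      then show "\<exists>g d. single g 1 \<in> I \<and> k = g + d"
        using gd by blast
    qed
  qed
  moreover have "I \<inter> monomials \<subseteq> X"
  proof
    fix q assume "q \<in> I \<inter> monomials"
    then obtain g where "q = single g 1" "q \<in> I" unfolding monomials_def by auto
    moreover have "keys q = {g}" using \<open>q = single g 1\<close> by simp
    ultimately show "q \<in> X" unfolding X_def by force
  qed
  ultimately have "ideal_gen (I \<inter> monomials) \<subseteq> X" unfolding ideal_gen_def by blast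
  then have "p \<in> X" using p mi unfolding monomial_ideal_def by blast
  then obtain g d where "single g 1 \<in> I" "m = g + d" using m unfolding X_def by blast
  then show ?thesis using mono_dvd id by blast
qed

section \<open>Shift and sigma\<close>

lemma lookup_shift: "lookup (shift_mono m) (i, j) = (if j = 0 then 0 else lookup m (i, j - 1))"
proof -
  have "lookup (shift_mono m) (i, j) = (\<Sum>v\<in>keys m. if (fst v, Suc (snd v)) = (i, j) then lookup m v else 0)"
    unfolding shift_mono_def by (simp add: lookup_sum lookup_single when_def)
  also have "\<dots> = (\<Sum>v\<in>keys m. if j \<noteq> 0 \<and> v = (i, j - 1) then lookup m v else 0)"
    by (intro sum.cong refl) auto
  also have "\<dots> = (if j = 0 then 0 else lookup m (i, j - 1))"
    by (cases "j = 0") (auto simp: in_keys_iff)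
  finally show ?thesis .
qed

lemma shift_single: "shift_mono (single (i, j) 1) = single (i, Suc j) 1"
proof (rule poly_mapping_eqI)
  fix v :: "'a \<times> nat"
  obtain a b where v: "v = (a, b)" by (cases v)
  show "lookup (shift_mono (single (i, j) 1)) v = lookup (single (i, Suc j) 1) v"
    unfolding v lookup_shift by (cases b) (auto simp: lookup_single when_def)
qed

lemma lookup_sigmaR: "lookup (sigmaR \<sigma> p) k = (\<Sum>m\<in>keys p. if shift_mono m = k then \<sigma> (lookup p m) else 0)"
  unfolding sigmaR_def by (simp add: lookup_sum lookup_single when_def)

lemma keys_sigmaR: "k \<in> keys (sigmaR \<sigma> p) \<Longrightarrow> \<exists>m\<in>keys p. k = shift_mono m"
proof -
  assume "k \<in> keys (sigmaR \<sigma> p)"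
  then have "(\<Sum>m\<in>keys p. if shift_mono m = k then \<sigma> (lookup p m) else 0) \<noteq> 0"
    by (simp add: in_keys_iff lookup_sigmaR)
  then obtain m where "m \<in> keys p" "(if shift_mono m = k then \<sigma> (lookup p m) else 0) \<noteq> 0"
    by (rule sum.not_neutral_contains_not_neutral)
  then show ?thesis by (cases "shift_mono m = k") auto
qed

lemma sigmaR_single1:
  assumes "difference_field \<sigma>"
  shows "sigmaR \<sigma> (single m 1) = single (shift_mono m) 1"
  using assms unfolding sigmaR_def difference_field_def by simp

lemma sigmaR_dvar:
  assumes "difference_field \<sigma>"
  shows "sigmaR \<sigma> (dvar i j) = dvar i (Suc j)"
  unfolding dvar_def sigmaR_single1[OF assms] shift_single by (rule refl)

section \<open>Monomial prime ideals m^w\<close>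

definition hit :: "('n \<Rightarrow> int) \<Rightarrow> (('n \<times> nat) \<Rightarrow>\<^sub>0 nat) \<Rightarrow> bool" where
  "hit w m \<longleftrightarrow> (\<exists>i j. w i \<noteq> -1 \<and> nat (w i) \<le> j \<and> lookup m (i, j) \<noteq> 0)"

definition Ym :: "('n \<Rightarrow> int) \<Rightarrow> ('n, 'k::field) dpoly set" where
  "Ym w = {p. \<forall>m\<in>keys p. hit w m}"

lemma hit_add: "hit w (x + y) \<longleftrightarrow> hit w x \<or> hit w y"
  unfolding hit_def by (auto simp: lookup_add)

lemma hit_shift: "hit w m \<Longrightarrow> hit w (shift_mono m)"
proof -
  assume "hit w m"
  then obtain i j where "w i \<noteq> -1" "nat (w i) \<le> j" "lookup m (i, j) \<noteq> 0" unfolding hit_def by blast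
  moreover have "lookup (shift_mono m) (i, Suc j) = lookup m (i, j)" by (simp add: lookup_shift)
  ultimately show ?thesis unfolding hit_def by (intro exI[of _ i] exI[of _ "Suc j"]) auto
qed

lemma Ym_ideal: "is_ideal (Ym w :: ('n, 'k::field) dpoly set)"
  unfolding is_ideal_def
proof (intro conjI ballI allI)
  show "0 \<in> Ym w" by (simp add: Ym_def)
next
  fix a b :: "('n, 'k) dpoly" assume a: "a \<in> Ym w" and b: "b \<in> Ym w"
  show "a + b \<in> Ym w" unfolding Ym_def
  proof (rule CollectI, rule ballI)
    fix k assume "k \<in> keys (a + b)"
    then have "k \<in> keys a \<or> k \<in> keys b" using keys_add[of a b] by blast
    then show "hit w k" using a b unfolding Ym_def by blast
  qed
next
  fix r a :: "('n, 'k) dpoly" assume a: "a \<in> Ym w"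
  show "r * a \<in> Ym w" unfolding Ym_def
  proof (rule CollectI, rule ballI)
    fix k assume "k \<in> keys (r * a)"
    then have "k \<in> {x + y | x y. x \<in> keys r \<and> y \<in> keys a}" using keys_mult[of r a] by blast
    then obtain x y where k: "k = x + y" "y \<in> keys a" by blast
    then have "hit w y" using a unfolding Ym_def by blast
    then show "hit w k" using k hit_add by blast
  qed
qed

lemma Ym_sigma: "sigma_ideal \<sigma> (Ym w :: ('n, 'k::field) dpoly set)"
  unfolding sigma_ideal_def
proof (intro conjI ballI)
  show "is_ideal (Ym w)" by (rule Ym_ideal)
next
  fix a :: "('n, 'k) dpoly" assume a: "a \<in> Ym w"
  show "sigmaR \<sigma> a \<in> Ym w" unfolding Ym_def
  proof (rule CollectI, rule ballI)
    fix k assume "k \<in> keys (sigmaR \<sigma> a)"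
    then obtain m where "m \<in> keys a" "k = shift_mono m" using keys_sigmaR by blast
    then show "hit w k" using a hit_shift unfolding Ym_def by blast
  qed
qed

lemma single_in_Ym: "(single m 1 \<in> (Ym w :: ('n, 'k::field) dpoly set)) \<longleftrightarrow> hit w m"
  unfolding Ym_def by simp

lemma dvar_in_Ym: "w i \<noteq> -1 \<Longrightarrow> (dvar i (nat (w i)) :: ('n, 'k::field) dpoly) \<in> Ym w"
  unfolding dvar_def single_in_Ym hit_def
  by (intro exI[of _ i] exI[of _ "nat (w i)"]) simp

lemma dvar_shift_in:
  fixes J :: "('n, 'k::field) dpoly set"
  assumes df: "difference_field \<sigma>" and J: "sigma_ideal \<sigma> J" and d: "dvar i j0 \<in> J"
  shows "j0 \<le> j \<Longrightarrow> dvar i j \<in> J"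
proof (induction j)
  case 0 then show ?case using d by simp
next
  case (Suc j)
  show ?case
  proof (cases "j0 = Suc j")
    case True then show ?thesis using d by simp
  next
    case False
    then have "dvar i j \<in> J" using Suc by simp
    then have "sigmaR \<sigma> (dvar i j) \<in> J" using J unfolding sigma_ideal_def by blast
    moreover have "sigmaR \<sigma> (dvar i j) = dvar i (Suc j)" by (rule sigmaR_dvar[OF df])
    ultimately show ?thesis by simp
  qed
qed

lemma hit_split:
  fixes m :: "('n \<times> nat) \<Rightarrow>\<^sub>0 nat"
  assumes "lookup m (i, j) \<noteq> 0"
  shows "m = single (i, j) 1 + (m - single (i, j) 1)"
proof (rule poly_mapping_eqI)
  fix v show "lookup m v = lookup (single (i, j) 1 + (m - single (i, j) 1)) v"
    using assms by (cases "(i, j) = v") (auto simp: lookup_add lookup_minus lookup_single when_def)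
qed

lemma Ym_sub:
  fixes J :: "('n, 'k::field) dpoly set"
  assumes df: "difference_field \<sigma>" and J: "sigma_ideal \<sigma> J"
    and gen: "{dvar i (nat (w i)) | i. w i \<noteq> -1} \<subseteq> J"
  shows "Ym w \<subseteq> J"
proof
  have idJ: "is_ideal J" using J unfolding sigma_ideal_def by blast
  fix p :: "('n, 'k) dpoly" assume p: "p \<in> Ym w"
  show "p \<in> J"
  proof (rule ideal_from_monos[OF idJ])
    fix m assume "m \<in> keys p"
    then have "hit w m" using p unfolding Ym_def by blast
    then obtain i j where ij: "w i \<noteq> -1" "nat (w i) \<le> j" "lookup m (i, j) \<noteq> 0" unfolding hit_def by blast
    have "dvar i (nat (w i)) \<in> J" using gen ij by blast
    then have "(dvar i j :: ('n, 'k) dpoly) \<in> J" using dvar_shift_in[OF df J] ij by blast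
    then have "single (single (i, j) 1) 1 \<in> J" unfolding dvar_def .
    then show "single m 1 \<in> J" by (rule mono_dvd[OF idJ _ hit_split[OF ij(3)]])
  qed
qed

lemma mideal_eq:
  fixes w :: "'n \<Rightarrow> int"
  assumes df: "difference_field \<sigma>"
  shows "(mideal \<sigma> w :: ('n, 'k::field) dpoly set) = Ym w"
proof
  show "mideal \<sigma> w \<subseteq> Ym w"
    unfolding mideal_def sigma_ideal_gen_def
  proof (rule Inter_lower, rule CollectI, rule conjI)
    show "sigma_ideal \<sigma> (Ym w :: ('n, 'k) dpoly set)" by (rule Ym_sigma)
    show "{dvar i (nat (w i)) |i. w i \<noteq> -1} \<subseteq> (Ym w :: ('n, 'k) dpoly set)"
    proof
      fix x :: "('n, 'k) dpoly" assume "x \<in> {dvar i (nat (w i)) |i. w i \<noteq> -1}"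
      then obtain i where "x = dvar i (nat (w i))" "w i \<noteq> -1" by blast
      then show "x \<in> Ym w" using dvar_in_Ym[of w i] by simp
    qed
  qed
  show "Ym w \<subseteq> mideal \<sigma> w"
    unfolding mideal_def sigma_ideal_gen_def
  proof (rule Inter_greatest)
    fix J :: "('n, 'k) dpoly set" assume "J \<in> {J. sigma_ideal \<sigma> J \<and> {dvar i (nat (w i)) |i. w i \<noteq> -1} \<subseteq> J}"
    then have "sigma_ideal \<sigma> J" "{dvar i (nat (w i)) |i. w i \<noteq> -1} \<subseteq> J" by auto
    then show "Ym w \<subseteq> J" by (rule Ym_sub[OF df])
  qed
qed

definition hi :: "('n \<Rightarrow> int) \<Rightarrow> ('n, 'k::field) dpoly \<Rightarrow> ('n, 'k) dpoly" where
  "hi w p = (\<Sum>m\<in>{m\<in>keys p. hit w m}. single m (lookup p m))"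

definition lo :: "('n \<Rightarrow> int) \<Rightarrow> ('n, 'k::field) dpoly \<Rightarrow> ('n, 'k) dpoly" where
  "lo w p = p - hi w p"

lemma lookup_hi: "lookup (hi w p) k = (if hit w k then lookup p k else 0)"
proof -
  have "lookup (hi w p) k = (\<Sum>m\<in>{m\<in>keys p. hit w m}. if m = k then lookup p m else 0)"
    unfolding hi_def by (simp add: lookup_sum lookup_single when_def eq_commute)
  also have "\<dots> = (if k \<in> {m\<in>keys p. hit w m} then lookup p k else 0)"
    by (simp add: sum.delta)
  also have "\<dots> = (if hit w k then lookup p k else 0)"
    by (auto simp: in_keys_iff)
  finally show ?thesis .
qed

lemma lookup_lo: "lookup (lo w p) k = (if hit w k then 0 else lookup p k)"
  unfolding lo_def by (simp add: lookup_minus lookup_hi)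

lemma hi_in: "hi w p \<in> Ym w"
  unfolding Ym_def
proof (rule CollectI, rule ballI)
  fix k assume "k \<in> keys (hi w p)"
  then have "lookup (hi w p) k \<noteq> 0" by (simp add: in_keys_iff)
  then show "hit w k" by (simp add: lookup_hi split: if_splits)
qed

lemma Ym_iff_lo: "p \<in> Ym w \<longleftrightarrow> lo w p = 0"
proof
  assume p: "p \<in> Ym w"
  show "lo w p = 0"
  proof (rule poly_mapping_eqI)
    fix k
    have "lookup p k \<noteq> 0 \<Longrightarrow> hit w k" using p unfolding Ym_def by (auto simp: in_keys_iff)
    then show "lookup (lo w p) k = lookup 0 k" by (auto simp: lookup_lo)
  qed
next
  assume "lo w p = 0"
  then have "p = hi w p" unfolding lo_def by simp
  then show "p \<in> Ym w" using hi_in by metis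
qed

lemma lo_keys: "k \<in> keys (lo w p) \<Longrightarrow> \<not> hit w k"
  by (auto simp: in_keys_iff lookup_lo)

lemma Ym_prime:
  fixes a b :: "('n::finite, 'k::field) dpoly"
  assumes "a * b \<in> Ym w"
  shows "a \<in> Ym w \<or> b \<in> Ym w"
proof (rule ccontr)
  assume "\<not> (a \<in> Ym w \<or> b \<in> Ym w)"
  then have la: "lo w a \<noteq> 0" and lb: "lo w b \<noteq> 0" by (auto simp: Ym_iff_lo)
  have ea: "a = hi w a + lo w a" and eb: "b = hi w b + lo w b" unfolding lo_def by simp_all
  have "lo w a * lo w b = (hi w a + lo w a) * (hi w b + lo w b) - hi w a * (hi w b + lo w b) - lo w a * hi w b"
    by (simp add: algebra_simps)
  then have "lo w a * lo w b = a * b - hi w a * b - lo w a * hi w b"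
    by (simp only: ea[symmetric] eb[symmetric])
  moreover have "a * b - hi w a * b - lo w a * hi w b \<in> Ym w"
    by (intro ideal_diff Ym_ideal assms ideal_multR ideal_multL hi_in)
  ultimately have inY: "lo w a * lo w b \<in> Ym w" by simp
  have "keys (lo w a * lo w b) = {}"
  proof (rule ccontr)
    assume "keys (lo w a * lo w b) \<noteq> {}"
    then obtain k where k: "k \<in> keys (lo w a * lo w b)" by blast
    then have "hit w k" using inY unfolding Ym_def by blast
    moreover from k have "k \<in> {x + y | x y. x \<in> keys (lo w a) \<and> y \<in> keys (lo w b)}"
      using keys_mult[of "lo w a" "lo w b"] by blast
    then obtain x y where "k = x + y" "x \<in> keys (lo w a)" "y \<in> keys (lo w b)" by blast
    ultimately show False using lo_keys hit_add by metis
  qed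
  then have "lo w a * lo w b = 0" by simp
  then show False using dpoly_nzd la lb by blast
qed

lemma Ym_radical: "radical (Ym w :: ('n::finite, 'k::field) dpoly set)"
  unfolding radical_def
proof (intro allI impI)
  fix a :: "('n, 'k) dpoly" and k :: nat
  show "a ^ k \<in> Ym w \<Longrightarrow> a \<in> Ym w"
  proof (induction k)
    case 0
    have "(1 :: ('n, 'k) dpoly) = single 0 1" by simp
    moreover have "\<not> hit w 0" unfolding hit_def by simp
    ultimately have "(1 :: ('n, 'k) dpoly) \<notin> Ym w" using single_in_Ym by metis
    then show ?case using 0 by simp
  next
    case (Suc k)
    then have "a * a ^ k \<in> Ym w" by simp
    then show ?case using Ym_prime Suc.IH by blast
  qed
qed

lemma Ym_wm:
  fixes w :: "'n::finite \<Rightarrow> int"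
  shows "well_mixed \<sigma> (Ym w :: ('n, 'k::field) dpoly set)"
  unfolding well_mixed_def
proof (intro allI impI)
  fix a b :: "('n, 'k) dpoly" assume "a * b \<in> Ym w"
  then have "a \<in> Ym w \<or> b \<in> Ym w" by (rule Ym_prime)
  then show "a * sigmaR \<sigma> b \<in> Ym w"
  proof
    assume "a \<in> Ym w" then show ?thesis by (intro ideal_multR Ym_ideal)
  next
    assume "b \<in> Ym w"
    then have "sigmaR \<sigma> b \<in> Ym w" using Ym_sigma unfolding sigma_ideal_def by blast
    then show ?thesis by (intro ideal_multL Ym_ideal)
  qed
qed

section \<open>Vectors and monomials\<close>

definition mexp :: "('n::finite \<Rightarrow> int) \<Rightarrow> (('n \<times> nat) \<Rightarrow>\<^sub>0 nat)" where
  "mexp c = (\<Sum>i\<in>{i. c i \<noteq> -1}. single (i, nat (c i)) 1)"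

lemma ymono_mexp: "ymono c = single (mexp c) 1"
  unfolding ymono_def mexp_def by simp

lemma lookup_mexp: "lookup (mexp c) (i, j) = (if c i \<noteq> -1 \<and> j = nat (c i) then 1 else 0)"
proof -
  have "lookup (mexp c) (i, j) = (\<Sum>i'\<in>{i. c i \<noteq> -1}. if i' = i \<and> nat (c i') = j then (1::nat) else 0)"
    unfolding mexp_def lookup_sum by (intro sum.cong refl) (auto simp: lookup_single when_def)
  also have "\<dots> = (\<Sum>i'\<in>{i. c i \<noteq> -1}. if i' = i then (if nat (c i) = j then (1::nat) else 0) else 0)"
    by (intro sum.cong refl) auto
  also have "\<dots> = (if c i \<noteq> -1 \<and> j = nat (c i) then 1 else 0)"
    by (simp add: sum.delta')
  finally show ?thesis .
qed

lemma mexp_upd: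
  assumes "c i = -1" "t \<noteq> -1"
  shows "mexp (c(i := t)) = mexp c + single (i, nat t) 1"
proof (rule poly_mapping_eqI)
  fix v :: "'a \<times> nat"
  obtain i' j where v: "v = (i', j)" by (cases v)
  show "lookup (mexp (c(i := t))) v = lookup (mexp c + single (i, nat t) 1) v"
    unfolding v using assms by (auto simp: lookup_mexp lookup_add lookup_single when_def)
qed

lemma ymono_upd:
  assumes "c i = -1" "t \<noteq> -1"
  shows "(ymono (c(i := t)) :: ('n::finite, 'k::field) dpoly) = ymono c * dvar i (nat t)"
  unfolding ymono_mexp mexp_upd[of c i t, OF assms] dvar_def by (simp add: mult_single)

definition mv :: "(('n \<times> nat) \<Rightarrow>\<^sub>0 nat) \<Rightarrow> 'n \<Rightarrow> int" where
  "mv m i = (if \<exists>j. lookup m (i, j) \<noteq> 0 then int (Max {j. lookup m (i, j) \<noteq> 0}) else -1)"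

lemma finite_js: "finite {j. lookup m (i, j) \<noteq> 0}"
proof -
  have "{j. lookup m (i, j) \<noteq> 0} \<subseteq> snd ` keys m" by (force simp: in_keys_iff)
  then show ?thesis by (rule finite_subset) simp
qed

lemma mv_valid: "valid_vec (mv m)"
  unfolding valid_vec_def mv_def by auto

lemma mv_cases:
  "(mv m i = -1 \<and> (\<forall>j. lookup m (i, j) = 0)) \<or>
   (mv m i \<ge> 0 \<and> lookup m (i, nat (mv m i)) \<noteq> 0 \<and> (\<forall>j. lookup m (i, j) \<noteq> 0 \<longrightarrow> int j \<le> mv m i))"
proof (cases "\<exists>j. lookup m (i, j) \<noteq> 0")
  case True
  then have ne: "{j. lookup m (i, j) \<noteq> 0} \<noteq> {}" by blast
  have "Max {j. lookup m (i, j) \<noteq> 0} \<in> {j. lookup m (i, j) \<noteq> 0}"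
    using Max_in[OF finite_js ne] .
  moreover have "\<forall>j. lookup m (i, j) \<noteq> 0 \<longrightarrow> j \<le> Max {j. lookup m (i, j) \<noteq> 0}"
  proof (intro allI impI)
    fix j assume "lookup m (i, j) \<noteq> 0"
    then show "j \<le> Max {j. lookup m (i, j) \<noteq> 0}" by (intro Max_ge[OF finite_js]) simp
  qed
  ultimately show ?thesis using True unfolding mv_def by auto
next
  case False
  then show ?thesis unfolding mv_def by auto
qed

lemma valid_nn: "valid_vec w \<Longrightarrow> w i \<noteq> -1 \<Longrightarrow> 0 \<le> w i"
proof -
  assume "valid_vec w" "w i \<noteq> -1"
  moreover have "valid_vec w \<Longrightarrow> w i \<ge> -1" unfolding valid_vec_def by blast
  ultimately show ?thesis by linarith
qed

lemma hit_mv: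
  assumes "valid_vec w"
  shows "hit w m \<longleftrightarrow> (\<exists>i. w i \<noteq> -1 \<and> w i \<le> mv m i)"
proof
  assume "hit w m"
  then obtain i j where ij: "w i \<noteq> -1" "nat (w i) \<le> j" "lookup m (i, j) \<noteq> 0" unfolding hit_def by blast
  have "w i \<ge> 0" using valid_nn[OF assms ij(1)] .
  then have "w i \<le> int j" using ij(2) by linarith
  moreover have "int j \<le> mv m i" using mv_cases[of m i] ij(3) by auto
  ultimately show "\<exists>i. w i \<noteq> -1 \<and> w i \<le> mv m i" using ij(1) by force
next
  assume "\<exists>i. w i \<noteq> -1 \<and> w i \<le> mv m i"
  then obtain i where i: "w i \<noteq> -1" "w i \<le> mv m i" by blast
  have "w i \<ge> 0" using valid_nn[OF assms i(1)] .
  then have "mv m i \<ge> 0 \<and> lookup m (i, nat (mv m i)) \<noteq> 0" using mv_cases[of m i] i by auto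
  then show "hit w m" unfolding hit_def using i \<open>w i \<ge> 0\<close>
    by (intro exI[of _ i] exI[of _ "nat (mv m i)"]) auto
qed

lemma mv_mexp:
  assumes "valid_vec c"
  shows "mv (mexp c) = c"
proof
  fix i
  show "mv (mexp c) i = c i"
  proof (cases "c i = -1")
    case True
    then show ?thesis unfolding mv_def by (simp add: lookup_mexp)
  next
    case False
    then have "c i \<ge> 0" using valid_nn[OF assms] by blast
    have "{j. lookup (mexp c) (i, j) \<noteq> 0} = {nat (c i)}" using False by (auto simp: lookup_mexp)
    then show ?thesis unfolding mv_def using \<open>c i \<ge> 0\<close> by auto
  qed
qed

lemma mexp_mv_dvd: "m = mexp (mv m) + (m - mexp (mv m))"
proof (rule poly_mapping_eqI)
  fix v :: "'a \<times> nat"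
  obtain i j where v: "v = (i, j)" by (cases v)
  have "lookup (mexp (mv m)) (i, j) \<le> lookup m (i, j)"
    using mv_cases[of m i] by (auto simp: lookup_mexp)
  then show "lookup m v = lookup (mexp (mv m) + (m - mexp (mv m))) v"
    unfolding v by (simp add: lookup_add lookup_minus)
qed

definition inU :: "('n \<Rightarrow> int) \<Rightarrow> ('n \<Rightarrow> int) \<Rightarrow> bool" where
  "inU w v \<longleftrightarrow> (\<exists>i. w i \<noteq> -1 \<and> w i \<le> v i)"

lemma single_in_mideal:
  assumes df: "difference_field \<sigma>" and w: "valid_vec w"
  shows "(single m 1 \<in> (mideal \<sigma> w :: ('n::finite, 'k::field) dpoly set)) \<longleftrightarrow> inU w (mv m)"
  unfolding mideal_eq[OF df] single_in_Ym hit_mv[OF w] inU_def ..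

lemma ymono_in_mideal:
  assumes df: "difference_field \<sigma>" and w: "valid_vec w" and v: "valid_vec v"
  shows "(ymono v \<in> (mideal \<sigma> w :: ('n::finite, 'k::field) dpoly set)) \<longleftrightarrow> inU w v"
  unfolding ymono_mexp single_in_mideal[OF df w] mv_mexp[OF v] ..

section \<open>Well-mixed ideals and monomials\<close>

lemma ymono_up:
  fixes J :: "('n::finite, 'k::field) dpoly set"
  assumes df: "difference_field \<sigma>" and idJ: "is_ideal J" and wm: "well_mixed \<sigma> J"
    and c: "valid_vec c" and inJ: "ymono c \<in> J"
  shows "valid_vec c' \<Longrightarrow> c \<le> c' \<Longrightarrow> ymono c' \<in> J"
proof (induction "\<Sum>i\<in>UNIV. nat (c' i - c i)" arbitrary: c' rule: less_induct)
  case less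
  show ?case
  proof (cases "c' = c")
    case True then show ?thesis using inJ by simp
  next
    case False
    then obtain i where ci: "c i < c' i" using less(3) by (metis le_funD le_funI order_antisym_conv not_le)
    define c'' where "c'' = c'(i := c' i - 1)"
    have v'': "valid_vec c''" using c ci unfolding c''_def valid_vec_def
      by (smt (verit) fun_upd_apply less.prems(1) valid_vec_def)
    have le'': "c \<le> c''" using less(3) ci unfolding c''_def le_fun_def by auto
    have "(\<Sum>j\<in>UNIV. nat (c'' j - c j)) < (\<Sum>j\<in>UNIV. nat (c' j - c j))"
    proof (rule sum_strict_mono_ex1)
      show "finite (UNIV :: 'n set)" by simp
      show "\<forall>x\<in>UNIV. nat (c'' x - c x) \<le> nat (c' x - c x)" unfolding c''_def by auto
      show "\<exists>a\<in>UNIV. nat (c'' a - c a) < nat (c' a - c a)" unfolding c''_def using ci by (intro bexI[of _ i]) auto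
    qed
    then have IH: "ymono c'' \<in> J" using less(1) v'' le'' by blast
    have c'eq: "c' = c''(i := c'' i + 1)" unfolding c''_def by simp
    show ?thesis
    proof (cases "c'' i = -1")
      case True
      have "ymono (c''(i := 0)) = (ymono c'' :: ('n, 'k) dpoly) * dvar i (nat 0)"
        by (rule ymono_upd) (use True in auto)
      moreover have "c' = c''(i := 0)" using c'eq True by simp
      ultimately show ?thesis using IH ideal_multR[OF idJ] by simp
    next
      case False
      then have nn: "c'' i \<ge> 0" using valid_nn[OF v''] by blast
      define c0 where "c0 = c''(i := -1)"
      have "ymono (c0(i := c'' i)) = (ymono c0 :: ('n, 'k) dpoly) * dvar i (nat (c'' i))"
        by (rule ymono_upd) (use False in \<open>auto simp: c0_def\<close>)
      moreover have "c0(i := c'' i) = c''" unfolding c0_def by simp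
      ultimately have "ymono c0 * dvar i (nat (c'' i)) \<in> J" using IH by simp
      then have "ymono c0 * sigmaR \<sigma> (dvar i (nat (c'' i))) \<in> J" using wm unfolding well_mixed_def by blast
      moreover have "sigmaR \<sigma> (dvar i (nat (c'' i))) = (dvar i (Suc (nat (c'' i))) :: ('n, 'k) dpoly)"
        by (rule sigmaR_dvar[OF df])
      ultimately have "ymono c0 * dvar i (Suc (nat (c'' i))) \<in> J" by simp
      moreover have "ymono (c0(i := c'' i + 1)) = (ymono c0 :: ('n, 'k) dpoly) * dvar i (nat (c'' i + 1))"
        by (rule ymono_upd) (use nn in \<open>auto simp: c0_def\<close>)
      moreover have "nat (c'' i + 1) = Suc (nat (c'' i))" using nn by simp
      moreover have "c0(i := c'' i + 1) = c'" unfolding c0_def c'eq by simp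
      ultimately show ?thesis by simp
    qed
  qed
qed

definition sm :: "('n \<times> nat) set \<Rightarrow> (('n \<times> nat) \<Rightarrow>\<^sub>0 nat)" where
  "sm A = (\<Sum>v\<in>A. single v 1)"

lemma lookup_sm: "finite A \<Longrightarrow> lookup (sm A) v = (if v \<in> A then 1 else 0)"
  unfolding sm_def by (simp add: lookup_sum lookup_single when_def sum.delta)

lemma single_pow:
  fixes e :: "('n \<times> nat) \<Rightarrow>\<^sub>0 nat"
  shows "\<exists>E. (single e (1::'k::comm_ring_1)) ^ K = single E 1 \<and> (\<forall>v. lookup E v = K * lookup e v)"
proof (induction K)
  case 0
  then show ?case by (intro exI[of _ 0]) simp
next
  case (Suc K)
  then obtain E where E: "(single e (1::'k)) ^ K = single E 1" "\<forall>v. lookup E v = K * lookup e v" by blast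
  then show ?case
    by (intro exI[of _ "e + E"]) (simp add: mult_single lookup_add)
qed

lemma rad_sq:
  fixes I :: "('n, 'k::field) dpoly set"
  assumes idI: "is_ideal I" and rad: "radical I" and m: "single m 1 \<in> I"
  shows "single (sm (keys m)) 1 \<in> I"
proof -
  define K where "K = (\<Sum>v\<in>keys m. lookup m v)"
  obtain E where E: "(single (sm (keys m)) (1::'k)) ^ K = single E 1" "\<forall>v. lookup E v = K * lookup (sm (keys m)) v"
    using single_pow by blast
  have "E = m + (E - m)"
  proof (rule poly_mapping_eqI)
    fix v
    have "lookup m v \<le> lookup E v"
    proof (cases "v \<in> keys m")
      case True
      then have "lookup m v \<le> K" unfolding K_def by (intro member_le_sum) auto
      moreover have "lookup E v = K * lookup (sm (keys m)) v" using E(2) by blast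
      moreover have "lookup (sm (keys m)) v = 1" using True by (simp add: lookup_sm)
      ultimately show ?thesis by simp
    next
      case False then show ?thesis by (simp add: in_keys_iff)
    qed
    then show "lookup E v = lookup (m + (E - m)) v" by (simp add: lookup_add lookup_minus)
  qed
  then have "single E 1 \<in> I" by (rule mono_dvd[OF idI m])
  then have "(single (sm (keys m)) (1::'k)) ^ K \<in> I" using E(1) by simp
  then show ?thesis using rad unfolding radical_def by blast
qed

lemma L0:
  fixes I :: "('n, 'k::field) dpoly set"
  assumes df: "difference_field \<sigma>" and idI: "is_ideal I" and rad: "radical I" and wm: "well_mixed \<sigma> I"
    and h: "x * dvar i j * dvar i M \<in> I" and jM: "j \<le> M"
  shows "x * dvar i M \<in> I"
proof -
  have "\<And>j. j + d = M \<Longrightarrow> x * dvar i j * dvar i M \<in> I \<Longrightarrow> x * dvar i M * dvar i M \<in> I" for d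
  proof (induction d)
    case 0 then show ?case by simp
  next
    case (Suc d)
    have "(x * dvar i M) * dvar i j \<in> I" using Suc.prems(2) by (simp add: mult_ac)
    then have "(x * dvar i M) * sigmaR \<sigma> (dvar i j) \<in> I" using wm unfolding well_mixed_def by blast
    moreover have "sigmaR \<sigma> (dvar i j) = (dvar i (Suc j) :: ('n, 'k) dpoly)" by (rule sigmaR_dvar[OF df])
    ultimately have "x * dvar i (Suc j) * dvar i M \<in> I" by (simp add: mult_ac)
    then show ?case using Suc.IH[of "Suc j"] Suc.prems(1) by simp
  qed
  then have "x * dvar i M * dvar i M \<in> I" using h jM by (metis le_add_diff_inverse)
  then have "x * (x * dvar i M * dvar i M) \<in> I" by (rule ideal_multL[OF idI])
  then have "(x * dvar i M) ^ 2 \<in> I" by (simp add: power2_eq_square mult_ac)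
  then show ?thesis using rad unfolding radical_def by blast
qed

definition maxset :: "('n \<times> nat) set \<Rightarrow> ('n \<times> nat) set" where
  "maxset A = {(i, j) \<in> A. \<forall>j'. (i, j') \<in> A \<longrightarrow> j' \<le> j}"

lemma reduce_max:
  fixes I :: "('n, 'k::field) dpoly set"
  assumes df: "difference_field \<sigma>" and idI: "is_ideal I" and rad: "radical I" and wm: "well_mixed \<sigma> I"
  shows "finite A \<Longrightarrow> single (sm A) 1 \<in> I \<Longrightarrow> single (sm (maxset A)) 1 \<in> I"
proof (induction "card A" arbitrary: A rule: less_induct)
  case less
  show ?case
  proof (cases "maxset A = A")
    case True then show ?thesis using less by simp
  next
    case False
    then obtain i j where ij: "(i, j) \<in> A" "(i, j) \<notin> maxset A" unfolding maxset_def by auto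
    define Js where "Js = {j. (i, j) \<in> A}"
    have fJ: "finite Js" unfolding Js_def
      using finite_subset[of "{j. (i, j) \<in> A}" "snd ` A"] less(2) by force
    have ne: "Js \<noteq> {}" using ij unfolding Js_def by blast
    define M where "M = Max Js"
    have MA: "(i, M) \<in> A" using Max_in[OF fJ ne] unfolding M_def Js_def by simp
    have jlM: "j < M"
    proof -
      obtain j' where "(i, j') \<in> A" "\<not> j' \<le> j" using ij unfolding maxset_def by auto
      moreover have "j' \<le> M" using Max_ge[OF fJ] \<open>(i, j') \<in> A\<close> unfolding M_def Js_def by simp
      ultimately show ?thesis by simp
    qed
    define B where "B = A - {(i, j), (i, M)}"
    have fB: "finite B" using less(2) unfolding B_def by simp
    have A_eq: "A = insert (i, j) (insert (i, M) B)" using ij(1) MA unfolding B_def by auto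
    have A'_eq: "A - {(i, j)} = insert (i, M) B" using jlM MA unfolding B_def by auto
    have smA: "sm A = sm B + single (i, j) 1 + single (i, M) 1"
      unfolding A_eq sm_def using fB jlM by (simp add: B_def add_ac)
    have smA': "sm (A - {(i, j)}) = sm B + single (i, M) 1"
      unfolding A'_eq sm_def using fB by (simp add: B_def add_ac)
    define x where "x = (single (sm B) 1 :: ('n, 'k) dpoly)"
    have "single (sm A) 1 = x * dvar i j * dvar i M"
      unfolding smA x_def dvar_def by (simp add: mult_single)
    then have "x * dvar i j * dvar i M \<in> I" using less(3) by simp
    then have "x * dvar i M \<in> I" using L0[OF df idI rad wm] jlM by simp
    moreover have "single (sm (A - {(i, j)})) 1 = x * dvar i M"
      unfolding smA' x_def dvar_def by (simp add: mult_single)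
    ultimately have in': "single (sm (A - {(i, j)})) 1 \<in> I" by simp
    have "card (A - {(i, j)}) < card A" by (rule card_Diff1_less[OF less(2) ij(1)])
    then have "single (sm (maxset (A - {(i, j)}))) 1 \<in> I" using less(1) less(2) in' by simp
    moreover have "maxset (A - {(i, j)}) = maxset A"
    proof
      show "maxset (A - {(i, j)}) \<subseteq> maxset A"
      proof
        fix v assume v: "v \<in> maxset (A - {(i, j)})"
        obtain i0 j0 where v0: "v = (i0, j0)" by (cases v)
        have "\<forall>j'. (i0, j') \<in> A \<longrightarrow> j' \<le> j0"
        proof (intro allI impI)
          fix j' assume j': "(i0, j') \<in> A"
          show "j' \<le> j0"
          proof (cases "(i0, j') = (i, j)")
            case True
            then have "(i0, M) \<in> A - {(i, j)}" using MA jlM by auto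
            then have "M \<le> j0" using v unfolding v0 maxset_def by auto
            then show ?thesis using True jlM by simp
          next
            case False then show ?thesis using v j' unfolding v0 maxset_def by auto
          qed
        qed
        then show "v \<in> maxset A" using v unfolding v0 maxset_def by auto
      qed
      show "maxset A \<subseteq> maxset (A - {(i, j)})"
        using ij(2) unfolding maxset_def by auto
    qed
    ultimately show ?thesis by simp
  qed
qed

lemma sm_maxset_mv: fixes m :: "('n::finite \<times> nat) \<Rightarrow>\<^sub>0 nat" shows "sm (maxset (keys m)) = mexp (mv m)"
proof (rule poly_mapping_eqI)
  fix v :: "'n \<times> nat"
  obtain i j where v: "v = (i, j)" by (cases v)
  have fm: "finite (maxset (keys m))" unfolding maxset_def
    by (rule finite_subset[of _ "keys m"]) auto
  have "(i, j) \<in> maxset (keys m) \<longleftrightarrow> mv m i \<noteq> -1 \<and> j = nat (mv m i)"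
  proof
    assume a: "(i, j) \<in> maxset (keys m)"
    then have l: "lookup m (i, j) \<noteq> 0" unfolding maxset_def by (simp add: in_keys_iff)
    then have c2: "mv m i \<ge> 0 \<and> lookup m (i, nat (mv m i)) \<noteq> 0 \<and> (\<forall>j. lookup m (i, j) \<noteq> 0 \<longrightarrow> int j \<le> mv m i)"
      using mv_cases[of m i] by auto
    then have "nat (mv m i) \<le> j" using a unfolding maxset_def by (auto simp: in_keys_iff)
    moreover have "int j \<le> mv m i" using c2 l by blast
    ultimately show "mv m i \<noteq> -1 \<and> j = nat (mv m i)" using c2 by linarith
  next
    assume a: "mv m i \<noteq> -1 \<and> j = nat (mv m i)"
    then have c2: "mv m i \<ge> 0 \<and> lookup m (i, nat (mv m i)) \<noteq> 0 \<and> (\<forall>j. lookup m (i, j) \<noteq> 0 \<longrightarrow> int j \<le> mv m i)"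
      using mv_cases[of m i] by auto
    then have "\<forall>j'. lookup m (i, j') \<noteq> 0 \<longrightarrow> j' \<le> nat (mv m i)" by (simp add: le_nat_iff)
    then show "(i, j) \<in> maxset (keys m)" using a c2 unfolding maxset_def by (auto simp: in_keys_iff)
  qed
  then show "lookup (sm (maxset (keys m))) v = lookup (mexp (mv m)) v"
    unfolding v by (simp add: lookup_sm[OF fm] lookup_mexp)
qed

lemma I_mono_iff:
  fixes I :: "('n::finite, 'k::field) dpoly set"
  assumes df: "difference_field \<sigma>" and idI: "is_ideal I" and rad: "radical I" and wm: "well_mixed \<sigma> I"
  shows "single m 1 \<in> I \<longleftrightarrow> ymono (mv m) \<in> I"
proof
  assume "single m 1 \<in> I"
  then have "single (sm (keys m)) 1 \<in> I" by (rule rad_sq[OF idI rad])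
  then have "single (sm (maxset (keys m))) 1 \<in> I" using reduce_max[OF df idI rad wm, of "keys m"] by simp
  then show "ymono (mv m) \<in> I" by (simp add: sm_maxset_mv ymono_mexp)
next
  assume "ymono (mv m) \<in> I"
  then show "single m 1 \<in> I" unfolding ymono_mexp by (rule mono_dvd[OF idI _ mexp_mv_dvd])
qed

section \<open>Vector combinatorics\<close>

definition charP :: "(('n \<Rightarrow> int) \<Rightarrow> bool) \<Rightarrow> ('n \<Rightarrow> int) \<Rightarrow> bool" where
  "charP P b \<longleftrightarrow> valid_vec b \<and> P b \<and> (\<forall>b'. valid_vec b' \<and> P b' \<and> b' \<le> b \<longrightarrow> b' = b)"

lemma character_vector_charP: "character_vector X b = charP (\<lambda>v. ymono v \<in> X) b"
  unfolding character_vector_def charP_def by simp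

definition dualP :: "(('n \<Rightarrow> int) \<Rightarrow> bool) \<Rightarrow> ('n \<Rightarrow> int) \<Rightarrow> ('n \<Rightarrow> int) \<Rightarrow> bool" where
  "dualP P a v \<longleftrightarrow> (\<forall>b. charP P b \<longrightarrow> inU (vdiff a b) v)"

lemma valid_ge: "valid_vec v \<Longrightarrow> v i \<ge> -1"
  unfolding valid_vec_def by blast

lemma exists_min:
  fixes v :: "'n::finite \<Rightarrow> int"
  shows "valid_vec v \<Longrightarrow> P v \<Longrightarrow> \<exists>b. charP P b \<and> b \<le> v"
proof (induction "\<Sum>i\<in>UNIV. nat (v i + 1)" arbitrary: v rule: less_induct)
  case less
  show ?case
  proof (cases "charP P v")
    case True then show ?thesis by blast
  next
    case False
    then obtain b' where b': "valid_vec b'" "P b'" "b' \<le> v" "b' \<noteq> v"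
      using less.prems unfolding charP_def by blast
    then obtain i where i: "b' i < v i" by (metis le_funD le_funI order_antisym_conv not_le)
    have "(\<Sum>i\<in>UNIV. nat (b' i + 1)) < (\<Sum>i\<in>UNIV. nat (v i + 1))"
    proof (rule sum_strict_mono_ex1)
      show "finite (UNIV :: 'n set)" by simp
      show "\<forall>x\<in>UNIV. nat (b' x + 1) \<le> nat (v x + 1)"
      proof
        fix x show "nat (b' x + 1) \<le> nat (v x + 1)"
          by (rule nat_mono) (use le_funD[OF b'(3), of x] in simp)
      qed
      show "\<exists>a\<in>UNIV. nat (b' a + 1) < nat (v a + 1)"
        using i valid_ge[OF b'(1), of i] by (intro bexI[of _ i]) auto
    qed
    then obtain b where "charP P b" "b \<le> b'" using less.hyps b'(1,2) by blast
    then show ?thesis using b'(3) order_trans by blast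
  qed
qed

lemma vdiff_valid:
  assumes "valid_vec a" "\<And>i. c i \<noteq> -1 \<Longrightarrow> c i \<le> a i + 1"
  shows "valid_vec (vdiff a c)"
  unfolding valid_vec_def vdiff_def using assms(2) by force

lemma vdiff_vdiff:
  assumes "valid_vec c" "\<And>i. c i \<noteq> -1 \<Longrightarrow> c i \<le> a i + 1"
  shows "vdiff a (vdiff a c) = c"
proof
  fix i
  show "vdiff a (vdiff a c) i = c i"
  proof (cases "c i = -1")
    case True then show ?thesis unfolding vdiff_def by simp
  next
    case False
    then have "c i \<le> a i + 1" using assms(2) by blast
    then show ?thesis using False unfolding vdiff_def by simp
  qed
qed

locale vsetup =
  fixes P :: "('n::finite \<Rightarrow> int) \<Rightarrow> bool" and a :: "'n \<Rightarrow> int"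
  assumes up: "\<And>b v. valid_vec b \<Longrightarrow> P b \<Longrightarrow> b \<le> v \<Longrightarrow> valid_vec v \<Longrightarrow> P v"
    and va: "valid_vec a"
    and bound: "\<And>b. charP P b \<Longrightarrow> b \<le> a"
begin

abbreviation "Q \<equiv> dualP P a"

lemma charP_nn: "charP P b \<Longrightarrow> b i \<noteq> -1 \<Longrightarrow> 0 \<le> b i \<and> b i \<le> a i"
  using valid_nn[of b i] bound[of b] unfolding charP_def le_fun_def by auto

lemma vdiffP_valid: "charP P b \<Longrightarrow> valid_vec (vdiff a b)"
  by (rule vdiff_valid[OF va]) (use charP_nn in force)

lemma Q_up: "Q c \<Longrightarrow> c \<le> c' \<Longrightarrow> Q c'"
  unfolding dualP_def inU_def le_fun_def by (meson order_trans)

lemma VT2: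
  assumes c: "charP Q c"
  shows "c i \<le> a i + 1"
proof (rule ccontr)
  assume "\<not> c i \<le> a i + 1"
  then have gt: "c i > a i + 1" by simp
  define c' where "c' = c(i := a i + 1)"
  have vc': "valid_vec c'" unfolding c'_def valid_vec_def using c valid_ge[OF va, of i] unfolding charP_def valid_vec_def by auto
  have "c' \<le> c" unfolding c'_def le_fun_def using gt by auto
  moreover have "c' \<noteq> c" unfolding c'_def using gt by (metis fun_upd_same less_irrefl)
  moreover have "Q c'" unfolding dualP_def
  proof (intro allI impI)
    fix b assume b: "charP P b"
    then have "inU (vdiff a b) c" using c unfolding charP_def dualP_def by blast
    then obtain j where j: "vdiff a b j \<noteq> -1" "vdiff a b j \<le> c j" unfolding inU_def by blast
    have "vdiff a b j \<le> c' j"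
    proof (cases "j = i")
      case True
      have "b j \<noteq> -1" using j(1) unfolding vdiff_def by (auto split: if_splits)
      then have "0 \<le> b j" using charP_nn[OF b] by auto
      then show ?thesis using True \<open>b j \<noteq> -1\<close> unfolding c'_def vdiff_def by simp
    next
      case False then show ?thesis using j(2) unfolding c'_def by simp
    qed
    then show "inU (vdiff a b) c'" using j(1) unfolding inU_def by blast
  qed
  ultimately show False using c vc' unfolding charP_def by blast
qed

lemma VT1_fwd:
  assumes v: "valid_vec v" and Pv: "P v" and cQ: "charP Q c"
  shows "inU (vdiff a c) v"
proof (rule ccontr)
  assume nin: "\<not> inU (vdiff a c) v"
  obtain b where b: "charP P b" "b \<le> v" using exists_min[OF v, of P] Pv by blast
  then have "inU (vdiff a b) c" using cQ unfolding dualP_def charP_def by blast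
  then obtain i where i: "vdiff a b i \<noteq> -1" "vdiff a b i \<le> c i" unfolding inU_def by blast
  then have bi: "b i \<noteq> -1" unfolding vdiff_def by (auto split: if_splits)
  then have bb: "0 \<le> b i" "b i \<le> a i" using charP_nn[OF b(1)] by auto
  have ci: "a i + 1 - b i \<le> c i" using i bi unfolding vdiff_def by simp
  then have cn: "c i \<noteq> -1" using bb by linarith
  have "c i \<le> a i + 1" by (rule VT2[OF cQ])
  then have e: "vdiff a c i = a i + 1 - c i" "a i + 1 - c i \<noteq> -1" using cn unfolding vdiff_def by auto
  then have "\<not> (vdiff a c i \<le> v i)" using nin unfolding inU_def by metis
  then have "\<not> (a i + 1 - c i \<le> v i)" using e by simp
  moreover have "b i \<le> v i" using b(2) unfolding le_fun_def by blast
  ultimately show False using ci by linarith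
qed

lemma VT1_bwd:
  assumes v: "valid_vec v" and nP: "\<not> P v"
  shows "\<exists>c. charP Q c \<and> \<not> inU (vdiff a c) v"
proof -
  define c0 where "c0 = (\<lambda>i. if v i \<ge> a i + 1 then -1 else a i - v i)"
  have vc0: "valid_vec c0" unfolding valid_vec_def c0_def using valid_ge[OF v] by force
  have Qc0: "Q c0" unfolding dualP_def
  proof (intro allI impI)
    fix b assume b: "charP P b"
    have "\<not> b \<le> v" using up[of b v] b v nP unfolding charP_def by blast
    then obtain i where i: "v i < b i" unfolding le_fun_def by (meson not_le)
    have "b i \<noteq> -1" using i valid_ge[OF v, of i] by linarith
    then have bb: "0 \<le> b i" "b i \<le> a i" using charP_nn[OF b] by auto
    have "c0 i = a i - v i" unfolding c0_def using i bb by simp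
    then show "inU (vdiff a b) c0" unfolding inU_def vdiff_def using \<open>b i \<noteq> -1\<close> i bb
      by (intro exI[of _ i]) auto
  qed
  obtain c where c: "charP Q c" "c \<le> c0" using exists_min[OF vc0, of Q] Qc0 by blast
  have "\<not> inU (vdiff a c) v"
  proof
    assume "inU (vdiff a c) v"
    then obtain i where i: "vdiff a c i \<noteq> -1" "vdiff a c i \<le> v i" unfolding inU_def by blast
    then have ci: "c i \<noteq> -1" unfolding vdiff_def by (auto split: if_splits)
    then have "c i \<ge> 0" using valid_nn[of c i] c(1) unfolding charP_def by blast
    moreover have "c0 i \<ge> c i" using c(2) by (simp add: le_fun_def)
    ultimately have "c0 i \<ge> 0" by linarith
    then have "c0 i = a i - v i" unfolding c0_def by (auto split: if_splits)
    then show False using i ci \<open>c0 i \<ge> c i\<close> unfolding vdiff_def by simp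
  qed
  then show ?thesis using c(1) by blast
qed

lemma VT1: "valid_vec v \<Longrightarrow> P v \<longleftrightarrow> (\<forall>c. charP Q c \<longrightarrow> inU (vdiff a c) v)"
  using VT1_fwd VT1_bwd by blast

lemma VT2': "charP Q c \<Longrightarrow> c i \<noteq> -1 \<Longrightarrow> c i \<le> a i + 1"
  using VT2 by blast

lemma vdiffQ_valid: "charP Q c \<Longrightarrow> valid_vec (vdiff a c)"
  by (rule vdiff_valid[OF va VT2'])

lemma vdiffQ_inv: "charP Q c \<Longrightarrow> vdiff a (vdiff a c) = c"
  by (rule vdiff_vdiff) (auto simp: charP_def intro: VT2')
end

lemma in_Inter_iff: "x \<in> \<Inter>{f b | b. R b} \<longleftrightarrow> (\<forall>b. R b \<longrightarrow> x \<in> f b)"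
  by blast

lemma charP_cong: "(\<And>v. valid_vec v \<Longrightarrow> P1 v \<longleftrightarrow> P2 v) \<Longrightarrow> charP P1 c \<longleftrightarrow> charP P2 c"
  unfolding charP_def by metis

lemma poly_in_mideal:
  assumes df: "difference_field \<sigma>" and w: "valid_vec w"
  shows "(p \<in> (mideal \<sigma> w :: ('n::finite, 'k::field) dpoly set)) \<longleftrightarrow> (\<forall>m\<in>keys p. inU w (mv m))"
  unfolding mideal_eq[OF df] Ym_def hit_mv[OF w] inU_def by simp

lemma Inter_sigma: "(\<And>X. X \<in> F \<Longrightarrow> sigma_ideal \<sigma> X) \<Longrightarrow> sigma_ideal \<sigma> (\<Inter>F)"
  unfolding sigma_ideal_def is_ideal_def by blast

lemma Inter_radical: "(\<And>X. X \<in> F \<Longrightarrow> radical X) \<Longrightarrow> radical (\<Inter>F)"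
  unfolding radical_def by blast

lemma Inter_wm: "(\<And>X. X \<in> F \<Longrightarrow> well_mixed \<sigma> X) \<Longrightarrow> well_mixed \<sigma> (\<Inter>F)"
  unfolding well_mixed_def by blast

locale msetup =
  fixes \<sigma> :: "'k::field_char_0 \<Rightarrow> 'k"
    and I :: "('n::finite, 'k) dpoly set"
    and a :: "'n \<Rightarrow> int"
  assumes df: "difference_field \<sigma>"
    and sI: "sigma_ideal \<sigma> I" and radI: "radical I" and wmI: "well_mixed \<sigma> I" and miI: "monomial_ideal I"
    and va: "valid_vec a"
    and bnd: "\<forall>b. character_vector I b \<longrightarrow> b \<le> a"
begin

lemma idI: "is_ideal I" using sI unfolding sigma_ideal_def by blast

abbreviation "PI \<equiv> (\<lambda>v. ymono v \<in> I)"

lemma vs: "vsetup PI a"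
proof
  show "\<And>b v. valid_vec b \<Longrightarrow> ymono b \<in> I \<Longrightarrow> b \<le> v \<Longrightarrow> valid_vec v \<Longrightarrow> ymono v \<in> I"
    using ymono_up[OF df idI wmI] by blast
  show "valid_vec a" by (rule va)
  show "\<And>b. charP PI b \<Longrightarrow> b \<le> a" using bnd unfolding character_vector_charP by blast
qed

interpretation V: vsetup PI a by (rule vs)

lemma F1: "p \<in> I \<longleftrightarrow> (\<forall>m\<in>keys p. ymono (mv m) \<in> I)"
proof
  assume "p \<in> I"
  then show "\<forall>m\<in>keys p. ymono (mv m) \<in> I"
    using monomial_ideal_keys[OF idI miI] I_mono_iff[OF df idI radI wmI] by blast
next
  assume "\<forall>m\<in>keys p. ymono (mv m) \<in> I"
  then show "p \<in> I" using ideal_from_monos[OF idI] I_mono_iff[OF df idI radI wmI] by blast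
qed

abbreviation "D \<equiv> alexander_dual \<sigma> I a"

lemma F4: "p \<in> D \<longleftrightarrow> (\<forall>b. charP PI b \<longrightarrow> (\<forall>m\<in>keys p. inU (vdiff a b) (mv m)))"
  unfolding alexander_dual_def in_Inter_iff character_vector_charP
  using poly_in_mideal[OF df V.vdiffP_valid] by blast

lemma F5: "valid_vec v \<Longrightarrow> ymono v \<in> D \<longleftrightarrow> V.Q v"
  unfolding alexander_dual_def in_Inter_iff character_vector_charP dualP_def
  using ymono_in_mideal[OF df V.vdiffP_valid] by blast

lemma charD: "character_vector D c \<longleftrightarrow> charP V.Q c"
  unfolding character_vector_charP by (rule charP_cong) (rule F5)

lemma claim1: "I = \<Inter>{mideal \<sigma> (vdiff a b) | b. character_vector D b}"
proof (rule set_eqI)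
  fix p :: "('n, 'k) dpoly"
  have "p \<in> \<Inter>{mideal \<sigma> (vdiff a b) | b. character_vector D b} \<longleftrightarrow>
        (\<forall>c. charP V.Q c \<longrightarrow> (\<forall>m\<in>keys p. inU (vdiff a c) (mv m)))"
    unfolding in_Inter_iff charD using poly_in_mideal[OF df V.vdiffQ_valid] by blast
  also have "\<dots> \<longleftrightarrow> (\<forall>m\<in>keys p. ymono (mv m) \<in> I)"
    using V.VT1[OF mv_valid] by blast
  also have "\<dots> \<longleftrightarrow> p \<in> I" using F1 by blast
  finally show "p \<in> I \<longleftrightarrow> p \<in> \<Inter>{mideal \<sigma> (vdiff a b) | b. character_vector D b}" by blast
qed

abbreviation "S0 \<equiv> {vdiff a c | c. charP V.Q c}"

lemma S0_finite: "finite S0"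
proof -
  have "{c. charP V.Q c} \<subseteq> PiE UNIV (\<lambda>i. {-1..a i + 1})"
  proof
    fix c assume c: "c \<in> {c. charP V.Q c}"
    then have "\<forall>i. c i \<in> {-1..a i + 1}" using V.VT2 valid_ge unfolding charP_def by auto
    then show "c \<in> PiE UNIV (\<lambda>i. {-1..a i + 1})" by (simp add: PiE_iff)
  qed
  moreover have "finite (PiE (UNIV :: 'n set) (\<lambda>i. {-1..a i + 1}))" by (intro finite_PiE) auto
  ultimately have "finite {c. charP V.Q c}" by (rule finite_subset)
  then have "finite (vdiff a ` {c. charP V.Q c})" by simp
  moreover have "S0 = vdiff a ` {c. charP V.Q c}" by blast
  ultimately show ?thesis by simp
qed

lemma I_S0: "I = \<Inter>(mideal \<sigma> ` S0)"
proof -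
  have "mideal \<sigma> ` S0 = {mideal \<sigma> (vdiff a b) | b. character_vector D b}"
    unfolding charD by auto
  then show ?thesis using claim1 by simp
qed

lemma ymono_notin_I: "valid_vec t \<Longrightarrow> charP V.Q c \<Longrightarrow> \<not> inU (vdiff a c) t \<Longrightarrow> ymono t \<notin> I"
  using V.VT1 by blast

lemma S0_irred:
  assumes b: "b \<in> S0"
  shows "\<Inter>(mideal \<sigma> ` (S0 - {b})) \<noteq> I"
proof -
  obtain c where c: "charP V.Q c" "b = vdiff a c" using b by blast
  have vc: "valid_vec c" using c unfolding charP_def by blast
  define t where "t = (\<lambda>i. if c i = -1 then a i + 1 else a i - c i)"
  have vt: "valid_vec t" unfolding valid_vec_def t_def
  proof
    fix i show "-1 \<le> (if c i = -1 then a i + 1 else a i - c i)"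
      using valid_ge[OF va, of i] V.VT2[OF c(1), of i] by auto
  qed
  have nin: "\<not> inU (vdiff a c) t" unfolding inU_def vdiff_def t_def by auto
  have "ymono t \<notin> I" by (rule ymono_notin_I[OF vt c(1) nin])
  moreover have "ymono t \<in> \<Inter>(mideal \<sigma> ` (S0 - {b}))"
  proof (rule InterI)
    fix X assume "X \<in> mideal \<sigma> ` (S0 - {b})"
    then obtain c' where c': "charP V.Q c'" "X = mideal \<sigma> (vdiff a c')" "vdiff a c' \<noteq> b" by blast
    have vc': "valid_vec c'" using c' unfolding charP_def by blast
    have "inU (vdiff a c') t"
    proof (rule ccontr)
      assume n': "\<not> inU (vdiff a c') t"
      have "c' \<le> c" unfolding le_fun_def
      proof
        fix i
        show "c' i \<le> c i"
        proof (cases "c' i = -1")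
          case True then show ?thesis using valid_ge[OF vc, of i] by simp
        next
          case False
          then have c'nn: "0 \<le> c' i" using valid_nn[OF vc'] by blast
          have e: "vdiff a c' i = a i + 1 - c' i" using False unfolding vdiff_def by simp
          have "a i + 1 - c' i \<noteq> -1" using V.VT2[OF c'(1), of i] by simp
          then have "\<not> (vdiff a c' i \<le> t i)" using n' e unfolding inU_def by metis
          then have "\<not> (a i + 1 - c' i \<le> t i)" using e by simp
          then show ?thesis unfolding t_def using c'nn by (auto split: if_splits)
        qed
      qed
      then have "c' = c" using c(1) c'(1) vc' unfolding charP_def by blast
      then show False using c' c by simp
    qed
    then have "ymono t \<in> mideal \<sigma> (vdiff a c')" using ymono_in_mideal[OF df V.vdiffQ_valid[OF c'(1)] vt] by blast
    then show "ymono t \<in> X" using c'(2) by simp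
  qed
  ultimately show ?thesis by blast
qed

lemma S0_decomp: "irredundant_decomp \<sigma> I S0"
  unfolding irredundant_decomp_def
proof (intro conjI ballI)
  show "finite S0" by (rule S0_finite)
  show "I = \<Inter>(mideal \<sigma> ` S0)" by (rule I_S0)
next
  fix b assume "b \<in> S0"
  then show "valid_vec b" using V.vdiffQ_valid by auto
next
  fix b assume "b \<in> S0"
  then show "\<Inter>(mideal \<sigma> ` (S0 - {b})) \<noteq> I" by (rule S0_irred)
qed

lemma mideal_mono:
  assumes w: "valid_vec w" and w': "valid_vec w'"
    and h: "\<And>i. w' i \<noteq> -1 \<Longrightarrow> w i \<noteq> -1 \<and> w i \<le> w' i"
  shows "(mideal \<sigma> w' :: ('n, 'k) dpoly set) \<subseteq> mideal \<sigma> w"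
proof
  fix p :: "('n, 'k) dpoly" assume "p \<in> mideal \<sigma> w'"
  then have "\<forall>m\<in>keys p. inU w' (mv m)" using poly_in_mideal[OF df w'] by blast
  then have "\<forall>m\<in>keys p. inU w (mv m)" unfolding inU_def using h by (meson order_trans)
  then show "p \<in> mideal \<sigma> w" using poly_in_mideal[OF df w] by blast
qed

lemma comp_in_S0:
  assumes S: "irredundant_decomp \<sigma> I S" and bS: "b \<in> S"
  shows "b \<in> S0"
proof -
  have fS: "finite S" and vS: "\<And>b'. b' \<in> S \<Longrightarrow> valid_vec b'" and IS: "I = \<Inter>(mideal \<sigma> ` S)"
    and irr: "\<And>b'. b' \<in> S \<Longrightarrow> \<Inter>(mideal \<sigma> ` (S - {b'})) \<noteq> I"
    using S unfolding irredundant_decomp_def by auto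
  have vb: "valid_vec b" using vS bS by blast
  define N where "N = Max ((\<lambda>i. a i + 1) ` UNIV \<union> (\<lambda>p. fst p (snd p)) ` (S \<times> UNIV))"
  have finN: "finite ((\<lambda>i. a i + 1) ` UNIV \<union> (\<lambda>p. fst p (snd p)) ` (S \<times> (UNIV :: 'n set)))"
    using fS by simp
  have hN1: "a i + 1 \<le> N" for i unfolding N_def by (rule Max_ge[OF finN]) blast
  have hN2: "b' i \<le> N" if "b' \<in> S" for b' i
    unfolding N_def by (rule Max_ge[OF finN]) (use that in force)
  have a1: "a i + 1 \<ge> 0" for i using valid_ge[OF va, of i] by simp
  define t where "t = (\<lambda>i. if b i = -1 then N else b i - 1)"
  have vt: "valid_vec t" unfolding valid_vec_def t_def
  proof
    fix i show "-1 \<le> (if b i = -1 then N else b i - 1)"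
      using hN1[of i] a1[of i] valid_nn[OF vb, of i] by auto
  qed
  have "\<not> inU b t" unfolding inU_def t_def by auto
  then have "ymono t \<notin> mideal \<sigma> b" using ymono_in_mideal[OF df vb vt] by blast
  moreover have "I \<subseteq> mideal \<sigma> b" using IS bS by blast
  ultimately have "\<not> PI t" by blast
  then obtain c where c: "charP V.Q c" "\<not> inU (vdiff a c) t" using V.VT1_bwd[OF vt] by blast
  have vc: "valid_vec c" using c(1) unfolding charP_def by blast
  have R1: "b i \<noteq> -1 \<and> b i \<le> a i + 1 - c i" if ci: "c i \<noteq> -1" for i
  proof -
    have c0: "0 \<le> c i" "c i \<le> a i + 1" using valid_nn[OF vc ci] V.VT2[OF c(1)] by auto
    have e: "vdiff a c i = a i + 1 - c i" using ci unfolding vdiff_def by simp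
    have "a i + 1 - c i \<noteq> -1" using c0 by simp
    then have "\<not> (vdiff a c i \<le> t i)" using c(2) e unfolding inU_def by metis
    then have nt: "\<not> (a i + 1 - c i \<le> t i)" using e by simp
    show ?thesis
    proof (cases "b i = -1")
      case True then show ?thesis using nt hN1[of i] c0 unfolding t_def by simp
    next
      case False then show ?thesis using nt unfolding t_def by simp
    qed
  qed
  define t' where "t' = (\<lambda>i. if c i = -1 then N else a i - c i)"
  have vt': "valid_vec t'" unfolding valid_vec_def t'_def
  proof
    fix i show "-1 \<le> (if c i = -1 then N else a i - c i)"
      using hN1[of i] a1[of i] V.VT2[OF c(1), of i] by auto
  qed
  have "\<not> inU (vdiff a c) t'" unfolding inU_def vdiff_def t'_def by auto
  then have "ymono t' \<notin> I" by (rule ymono_notin_I[OF vt' c(1)])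
  then obtain b' where b': "b' \<in> S" "ymono t' \<notin> mideal \<sigma> b'" using IS by blast
  have vb': "valid_vec b'" using vS b'(1) by blast
  have nb': "\<not> inU b' t'" using b'(2) ymono_in_mideal[OF df vb' vt'] by blast
  have R2: "c i \<noteq> -1 \<and> a i + 1 - c i \<le> b' i" if bi: "b' i \<noteq> -1" for i
  proof -
    have nt: "\<not> (b' i \<le> t' i)" using nb' bi unfolding inU_def by blast
    show ?thesis
    proof (cases "c i = -1")
      case True then show ?thesis using nt hN2[OF b'(1), of i] unfolding t'_def by simp
    next
      case False then show ?thesis using nt unfolding t'_def by simp
    qed
  qed
  have comp: "b i \<noteq> -1 \<and> b i \<le> b' i" if "b' i \<noteq> -1" for i
    using R1 R2 that by force
  have "b' = b"
  proof (rule ccontr)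
    assume ne: "b' \<noteq> b"
    have sub: "mideal \<sigma> b' \<subseteq> (mideal \<sigma> b :: ('n, 'k) dpoly set)"
      by (rule mideal_mono[OF vb vb' comp])
    have "\<Inter>(mideal \<sigma> ` (S - {b})) = I"
    proof
      show "I \<subseteq> \<Inter>(mideal \<sigma> ` (S - {b}))" using IS by blast
      show "\<Inter>(mideal \<sigma> ` (S - {b})) \<subseteq> I"
      proof
        fix p assume p: "p \<in> \<Inter>(mideal \<sigma> ` (S - {b}))"
        have "b' \<in> S - {b}" using b'(1) ne by blast
        then have "p \<in> mideal \<sigma> b'" using p by blast
        then have "p \<in> mideal \<sigma> b" using sub by blast
        then have "\<forall>x\<in>S. p \<in> mideal \<sigma> x" using p by blast
        then show "p \<in> I" using IS by blast
      qed
    qed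
    then show False using irr[OF bS] by blast
  qed
  have "b = vdiff a c"
  proof
    fix i show "b i = vdiff a c i"
    proof (cases "b i = -1")
      case True
      then have "c i = -1" using R1 by blast
      then show ?thesis using True unfolding vdiff_def by simp
    next
      case False
      then have "c i \<noteq> -1 \<and> a i + 1 - c i \<le> b i" using R2 \<open>b' = b\<close> by blast
      moreover have "b i \<le> a i + 1 - c i" using R1 calculation by blast
      ultimately show ?thesis unfolding vdiff_def by simp
    qed
  qed
  then show ?thesis using c(1) by blast
qed

lemma comp_iff: "irreducible_component \<sigma> I b \<longleftrightarrow> b \<in> S0"
  unfolding irreducible_component_def using comp_in_S0 S0_decomp by blast

lemma G_eq: "{ymono (vdiff a b) | b. irreducible_component \<sigma> I b} = {ymono c | c. charP V.Q c}"
proof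
  show "{ymono (vdiff a b) | b. irreducible_component \<sigma> I b} \<subseteq> {ymono c | c. charP V.Q c}"
  proof
    fix x assume "x \<in> {ymono (vdiff a b) | b. irreducible_component \<sigma> I b}"
    then obtain b where "x = ymono (vdiff a b)" "b \<in> S0" using comp_iff by blast
    then obtain c where "x = ymono (vdiff a (vdiff a c))" "charP V.Q c" by blast
    then show "x \<in> {ymono c | c. charP V.Q c}" using V.vdiffQ_inv by auto
  qed
  show "{ymono c | c. charP V.Q c} \<subseteq> {ymono (vdiff a b) | b. irreducible_component \<sigma> I b}"
  proof
    fix x assume "x \<in> {ymono c | c. charP V.Q c}"
    then obtain c where c: "x = ymono c" "charP V.Q c" by blast
    then have "vdiff a c \<in> S0" by blast
    then have "irreducible_component \<sigma> I (vdiff a c)" using comp_iff by blast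
    moreover have "x = ymono (vdiff a (vdiff a c))" using c V.vdiffQ_inv by simp
    ultimately show "x \<in> {ymono (vdiff a b) | b. irreducible_component \<sigma> I b}" by blast
  qed
qed

lemma D_props: "sigma_ideal \<sigma> D \<and> radical D \<and> well_mixed \<sigma> D"
proof -
  let ?F = "{mideal \<sigma> (vdiff a b) | b. character_vector I b}"
  have mem: "\<exists>w. X = Ym w" if X: "X \<in> ?F" for X
  proof -
    obtain b where b: "X = mideal \<sigma> (vdiff a b)" "character_vector I b" using X by blast
    have "X = Ym (vdiff a b)" using b(1) mideal_eq[OF df] by simp
    then show ?thesis by blast
  qed
  have "D = \<Inter>?F" unfolding alexander_dual_def ..
  moreover have "sigma_ideal \<sigma> (\<Inter>?F)"
  proof (rule Inter_sigma)
    fix X assume "X \<in> ?F"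
    then obtain w where "X = Ym w" using mem by blast
    then show "sigma_ideal \<sigma> X" using Ym_sigma by simp
  qed
  moreover have "radical (\<Inter>?F)"
  proof (rule Inter_radical)
    fix X assume "X \<in> ?F"
    then obtain w where "X = Ym w" using mem by blast
    then show "radical X" using Ym_radical by simp
  qed
  moreover have "well_mixed \<sigma> (\<Inter>?F)"
  proof (rule Inter_wm)
    fix X assume "X \<in> ?F"
    then obtain w where "X = Ym w" using mem by blast
    then show "well_mixed \<sigma> X" using Ym_wm by simp
  qed
  ultimately show ?thesis by simp
qed

lemma claim2: "D = rwm_gen \<sigma> {ymono (vdiff a b) | b. irreducible_component \<sigma> I b}"
  unfolding G_eq rwm_gen_def
proof
  let ?G = "{ymono c | c. charP V.Q c} :: ('n, 'k) dpoly set"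
  have GD: "?G \<subseteq> D"
  proof
    fix x assume "x \<in> ?G"
    then obtain c where c: "x = ymono c" "charP V.Q c" by blast
    then have "valid_vec c" "V.Q c" unfolding charP_def by auto
    then show "x \<in> D" using F5 c(1) by blast
  qed
  show "\<Inter>{J. sigma_ideal \<sigma> J \<and> radical J \<and> well_mixed \<sigma> J \<and> ?G \<subseteq> J} \<subseteq> D"
    by (rule Inter_lower) (use D_props GD in simp)
  show "D \<subseteq> \<Inter>{J. sigma_ideal \<sigma> J \<and> radical J \<and> well_mixed \<sigma> J \<and> ?G \<subseteq> J}"
  proof (rule Inter_greatest)
    fix J assume "J \<in> {J. sigma_ideal \<sigma> J \<and> radical J \<and> well_mixed \<sigma> J \<and> ?G \<subseteq> J}"
    then have sJ: "sigma_ideal \<sigma> J" and wJ: "well_mixed \<sigma> J" and GJ: "?G \<subseteq> J" by auto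
    have idJ: "is_ideal J" using sJ unfolding sigma_ideal_def by blast
    show "D \<subseteq> J"
    proof
      fix p assume p: "p \<in> D"
      show "p \<in> J"
      proof (rule ideal_from_monos[OF idJ])
        fix m assume m: "m \<in> keys p"
        have "\<forall>b. charP PI b \<longrightarrow> (\<forall>m\<in>keys p. inU (vdiff a b) (mv m))" using p F4 by simp
        then have "\<forall>b. charP PI b \<longrightarrow> inU (vdiff a b) (mv m)" using m by simp
        then have "V.Q (mv m)" unfolding dualP_def .
        then obtain c where c: "charP V.Q c" "c \<le> mv m" using exists_min[OF mv_valid, of V.Q m] by blast
        then have "ymono c \<in> J" using GJ by blast
        moreover have "valid_vec c" using c(1) unfolding charP_def by simp
        ultimately have "ymono (mv m) \<in> J"
          using ymono_up[OF df idJ wJ _ _ mv_valid c(2)] by simp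
        then show "single m 1 \<in> J" unfolding ymono_mexp by (rule mono_dvd[OF idJ _ mexp_mv_dvd])
      qed
    qed
  qed
qed

end

theorem theorem7p4:
  fixes \<sigma> :: "'k::field_char_0 \<Rightarrow> 'k"
    and I :: "('n::finite, 'k) dpoly set"
    and a :: "'n \<Rightarrow> int"
  assumes "difference_field \<sigma>"
    and "sigma_ideal \<sigma> I" and "radical I" and "well_mixed \<sigma> I" and "monomial_ideal I"
    and "valid_vec a"
    and "\<forall>b. character_vector I b \<longrightarrow> b \<le> a"
  shows "I = \<Inter>{mideal \<sigma> (vdiff a b) | b. character_vector (alexander_dual \<sigma> I a) b} \<and>
         alexander_dual \<sigma> I a =
           rwm_gen \<sigma> {ymono (vdiff a b) | b. irreducible_component \<sigma> I b}"
proof -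
  interpret M: msetup \<sigma> I a by (unfold_locales; fact assms)
  show ?thesis using M.claim1 M.claim2 by blast
qed

end
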